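(* Let $\mathcal{M}_1,\mathcal{M}_2$ be real QMMs (all unitary and measurement matrices have real entries) with common alphabets $\Sigma,\Gamma$, state spaces of dimensions $n_1,n_2$, and initial density operators $\rho_1,\rho_2$. Let $N'=\frac12 n_1(n_1+1)+\frac12 n_2(n_2+1)-1$. Then $(\mathcal{M}_1,\rho_1)\sim(\mathcal{M}_2,\rho_2)\iff(\mathcal{M}_1,\rho_1)\sim^{N'}(\mathcal{M}_2,\rho_2)$, and for every $k\in\mathbb{N}$, $(\mathcal{M}_1,\rho_1)\sim_k(\mathcal{M}_2,\rho_2)\iff(\mathcal{M}_1,\rho_1)\sim_k^{N'}(\mathcal{M}_2,\rho_2)$.
   Context: A quantum Mealy machine (QMM) is a tuple $\mathcal{M}=(\Sigma,\Gamma,\mathcal{H},U,M)$ where $\Sigma,\Gamma$ are finite alphabets, $\mathcal{H}$ a finite-dimensional complex Hilbert space, $U=\{U_\sigma\}_{\sigma\in\Sigma}$ unitary operators on $\mathcal{H}$, $M=\{M_\gamma\}_{\gamma\in\Gamma}$ linear operators with $\sum_\gamma M_\gamma^\dagger M_\gamma=I$. For a word $a$, $|a|$ is its length, $a[l:r]=a[l]\cdots a[r]$ (empty if $l>r$), $U_a=U_{a[|a|]}\cdots U_{a[1]}$, $U_\epsilon=I$. A scheduler for $a\in\Sigma^*$ is a finite non-decreasing integer sequence $\mathcal{S}=(s_1\le\dots\le s_{|\mathcal{S}|})$ in $\{0,\dots,|a|\}$ (possibly empty). With $s_0=0$, $s_{|\mathcal{S}|+1}=|a|$, $a_i=a[s_{i-1}+1:s_i]$.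 For $b\in\Gamma^{|\mathcal{S}|}$, $V_{b|a,\mathcal{S}}=U_{a_{|\mathcal{S}|+1}}M_{b_{|\mathcal{S}|}}U_{a_{|\mathcal{S}|}}\cdots M_{b_1}U_{a_1}$ and $\Pr^{\mathcal{M}}_\rho(b|a,\mathcal{S})=\operatorname{tr}(V_{b|a,\mathcal{S}}\rho V_{b|a,\mathcal{S}}^\dagger)$. $(\mathcal{M}_1,\rho_1)\sim(\mathcal{M}_2,\rho_2)$ means $\Pr^{\mathcal{M}_1}_{\rho_1}(b|a,\mathcal{S})=\Pr^{\mathcal{M}_2}_{\rho_2}(b|a,\mathcal{S})$ for all $a\in\Sigma^*$, schedulers $\mathcal{S}$ for $a$, $b\in\Gamma^{|\mathcal{S}|}$; $\sim_k$ restricts to $|\mathcal{S}|\le k$; $\sim^m$ to $|a|+|\mathcal{S}|\le m$; $\sim^m_k$ to both. *)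

theory Defs
  imports "HOL-Analysis.Analysis"
begin

text \<open>Operators on an n-dimensional Hilbert space are represented as complex n x n
matrices, with the dimension given by a finite index type 'n (n = CARD('n)).\<close>

definition adj :: "complex^'n^'m \<Rightarrow> complex^'m^'n" where
  "adj A = (\<chi> i j. cnj (A $ j $ i))"

definition mtrace :: "complex^'n^'n \<Rightarrow> complex" where
  "mtrace A = (\<Sum>i\<in>UNIV. A $ i $ i)"

definition is_unitary :: "complex^'n^'n \<Rightarrow> bool" where
  "is_unitary A \<longleftrightarrow> adj A ** A = mat 1 \<and> A ** adj A = mat 1"

definition real_matrix :: "complex^'n^'m \<Rightarrow> bool" where
  "real_matrix A \<longleftrightarrow> (\<forall>i j. A $ i $ j \<in> \<real>)"

definition density_op :: "complex^'n^'n \<Rightarrow> bool" where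
  "density_op \<rho> \<longleftrightarrow> adj \<rho> = \<rho>
     \<and> (\<forall>v::complex^'n. 0 \<le> Re (\<Sum>i\<in>UNIV. cnj (v $ i) * (\<rho> *v v) $ i)
                          \<and> Im (\<Sum>i\<in>UNIV. cnj (v $ i) * (\<rho> *v v) $ i) = 0)
     \<and> mtrace \<rho> = 1"

definition qmm :: "('s::finite \<Rightarrow> complex^'n^'n) \<Rightarrow> ('g::finite \<Rightarrow> complex^'n^'n) \<Rightarrow> bool" where
  "qmm U M \<longleftrightarrow> (\<forall>s. is_unitary (U s)) \<and> (\<Sum>g\<in>UNIV. adj (M g) ** M g) = mat 1"

definition real_qmm :: "('s::finite \<Rightarrow> complex^'n^'n) \<Rightarrow> ('g::finite \<Rightarrow> complex^'n^'n) \<Rightarrow> bool" where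
  "real_qmm U M \<longleftrightarrow> qmm U M \<and> (\<forall>s. real_matrix (U s)) \<and> (\<forall>g. real_matrix (M g))"

fun Uword :: "('s \<Rightarrow> complex^'n^'n) \<Rightarrow> 's list \<Rightarrow> complex^'n^'n" where
  "Uword U [] = mat 1"
| "Uword U (x # xs) = Uword U xs ** U x"

definition scheduler :: "nat list \<Rightarrow> 'a list \<Rightarrow> bool" where
  "scheduler S a \<longleftrightarrow> sorted S \<and> (\<forall>s\<in>set S. s \<le> length a)"

text \<open>Segments a_1, ..., a_{|S|+1} with a_i = a[s_{i-1}+1 : s_i], s_0 = 0, s_{|S|+1} = |a|.\<close>
definition segments :: "'a list \<Rightarrow> nat list \<Rightarrow> 'a list list" where
  "segments a S = map (\<lambda>(l, r). drop l (take r a)) (zip (0 # S) (S @ [length a]))"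

text \<open>Vprod U M [a_1,...,a_{m+1}] [b_1,...,b_m] = U_{a_{m+1}} M_{b_m} ... M_{b_1} U_{a_1}.\<close>
fun Vprod :: "('s \<Rightarrow> complex^'n^'n) \<Rightarrow> ('g \<Rightarrow> complex^'n^'n) \<Rightarrow> 's list list \<Rightarrow> 'g list \<Rightarrow> complex^'n^'n" where
  "Vprod U M [w] [] = Uword U w"
| "Vprod U M (w # ws) (g # gs) = Vprod U M ws gs ** M g ** Uword U w"
| "Vprod U M _ _ = mat 0"

definition Vop :: "('s \<Rightarrow> complex^'n^'n) \<Rightarrow> ('g \<Rightarrow> complex^'n^'n) \<Rightarrow> 'g list \<Rightarrow> 's list \<Rightarrow> nat list \<Rightarrow> complex^'n^'n" where
  "Vop U M b a S = Vprod U M (segments a S) b"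

definition Pr :: "('s \<Rightarrow> complex^'n^'n) \<Rightarrow> ('g \<Rightarrow> complex^'n^'n) \<Rightarrow> complex^'n^'n \<Rightarrow> 'g list \<Rightarrow> 's list \<Rightarrow> nat list \<Rightarrow> complex" where
  "Pr U M \<rho> b a S = mtrace (Vop U M b a S ** \<rho> ** adj (Vop U M b a S))"

definition equiv_on ::
  "('s list \<Rightarrow> nat list \<Rightarrow> bool) \<Rightarrow>
   ('s \<Rightarrow> complex^'n^'n) \<Rightarrow> ('g \<Rightarrow> complex^'n^'n) \<Rightarrow> complex^'n^'n \<Rightarrow>
   ('s \<Rightarrow> complex^'m^'m) \<Rightarrow> ('g \<Rightarrow> complex^'m^'m) \<Rightarrow> complex^'m^'m \<Rightarrow> bool" where
  "equiv_on P U1 M1 \<rho>1 U2 M2 \<rho>2 \<longleftrightarrow>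
     (\<forall>a S b. scheduler S a \<longrightarrow> length b = length S \<longrightarrow> P a S \<longrightarrow>
        Pr U1 M1 \<rho>1 b a S = Pr U2 M2 \<rho>2 b a S)"

definition qequiv where
  "qequiv U1 M1 \<rho>1 U2 M2 \<rho>2 = equiv_on (\<lambda>a S. True) U1 M1 \<rho>1 U2 M2 \<rho>2"

definition qequiv_k where
  "qequiv_k k U1 M1 \<rho>1 U2 M2 \<rho>2 = equiv_on (\<lambda>a S. length S \<le> k) U1 M1 \<rho>1 U2 M2 \<rho>2"

definition qequiv_m where
  "qequiv_m m U1 M1 \<rho>1 U2 M2 \<rho>2 = equiv_on (\<lambda>a S. length a + length S \<le> m) U1 M1 \<rho>1 U2 M2 \<rho>2"

definition qequiv_km where
  "qequiv_km k m U1 M1 \<rho>1 U2 M2 \<rho>2 =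
     equiv_on (\<lambda>a S. length S \<le> k \<and> length a + length S \<le> m) U1 M1 \<rho>1 U2 M2 \<rho>2"

end

theory Submission
  imports Defs
begin

definition rtr :: "real^'n^'n \<Rightarrow> real" where
  "rtr X = (\<Sum>i\<in>UNIV. X $ i $ i)"

lemma linear_rtr: "linear rtr"
  by (rule linearI) (auto simp: rtr_def sum.distrib sum_distrib_left)

lemma linear_sandwich: "linear (\<lambda>X::real^'n^'n. A ** X ** transpose (A::real^'n^'m))"
proof (rule linearI)
  fix X Y :: "real^'n^'n"
  show "A ** (X + Y) ** transpose A = A ** X ** transpose A + A ** Y ** transpose A"
    by (simp add: vec_eq_iff matrix_matrix_mult_def distrib_left distrib_right sum.distrib)
next
  fix c :: real and X :: "real^'n^'n"
  show "A ** (c *\<^sub>R X) ** transpose A = c *\<^sub>R (A ** X ** transpose A)"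
    by (simp add: vec_eq_iff matrix_matrix_mult_def sum_distrib_left sum_distrib_right mult_ac)
qed

definition Fm :: "'n \<times> 'n \<Rightarrow> real^'n^'n" where
  "Fm p = (\<chi> a b. (if fst p = a \<and> snd p = b then 1 else 0) + (if snd p = a \<and> fst p = b then 1 else 0))"

lemma Fm_nth: "Fm p $ a $ b = (if p = (a,b) then 1 else 0) + (if p = (b,a) then (1::real) else 0)"
  unfolding Fm_def by (cases p) auto

lemma mif: "(c::real) * (if A then 1 else 0) = (if A then c else 0)" by simp

lemma sym_span:
  fixes e :: "'n::finite \<Rightarrow> nat"
  assumes inj: "inj e" and sym: "transpose X = X"
  shows "X \<in> span (Fm ` {p. e (fst p) \<le> e (snd p)})"
proof -
  define P where "P = {p::'n\<times>'n. e (fst p) \<le> e (snd p)}"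
  define c where "c p = (if fst p = snd p then X $ fst p $ fst p / 2 else X $ fst p $ snd p)" for p
  have X: "X = (\<Sum>p\<in>P. c p *\<^sub>R Fm p)"
  proof -
    have "(\<Sum>p\<in>P. c p *\<^sub>R Fm p) $ a $ b = X $ a $ b" for a b
    proof -
      have "(\<Sum>p\<in>P. c p *\<^sub>R Fm p) $ a $ b = (\<Sum>p\<in>P. c p * (Fm p $ a $ b))"
        by (simp add: sum_component)
      also have "\<dots> = (\<Sum>p\<in>P. (if p = (a,b) then c p else 0)) + (\<Sum>p\<in>P. (if p = (b,a) then c p else 0))"
      proof -
        have "c p * (Fm p $ a $ b) = (if p = (a,b) then c p else 0) + (if p = (b,a) then c p else 0)" for p
          by (simp only: Fm_nth distrib_left mif)
        then have "(\<Sum>p\<in>P. c p * (Fm p $ a $ b)) = (\<Sum>p\<in>P. (if p = (a,b) then c p else 0) + (if p = (b,a) then c p else 0))"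
          by (intro sum.cong) auto
        then show ?thesis by (simp only: sum.distrib)
      qed
      also have "\<dots> = (if (a,b) \<in> P then c (a,b) else 0) + (if (b,a) \<in> P then c (b,a) else 0)"
        by (simp add: sum.delta')
      also have "\<dots> = X $ a $ b"
      proof -
        have xs: "X $ b $ a = X $ a $ b" using sym
          by (metis transpose_def vec_lambda_beta)
        show ?thesis
          using inj[unfolded inj_def, rule_format, of a b] xs
          by (auto simp: P_def c_def)
      qed
      finally show ?thesis .
    qed
    then show ?thesis by (simp add: vec_eq_iff)
  qed
  show ?thesis unfolding P_def[symmetric]
    by (subst X) (intro span_sum span_scale span_base imageI)
qed

lemma card_half:
  fixes e :: "'n::finite \<Rightarrow> nat"
  assumes inj: "inj e"
  shows "card {p::'n\<times>'n. e (fst p) \<le> e (snd p)} = CARD('n) * (CARD('n) + 1) div 2"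
proof -
  define P where "P = {p::'n\<times>'n. e (fst p) \<le> e (snd p)}"
  have Q: "prod.swap ` P = {p. e (snd p) \<le> e (fst p)}"
    by (auto simp: P_def image_iff)
  have cQ: "card (prod.swap ` P) = card P"
  proof (rule card_image, rule inj_onI)
    fix x y :: "'n\<times>'n" assume "prod.swap x = prod.swap y"
    then show "x = y" by (cases x, cases y) simp
  qed
  have U: "P \<union> prod.swap ` P = UNIV" unfolding Q by (auto simp: P_def)
  have I: "P \<inter> prod.swap ` P = (\<lambda>i. (i,i)) ` UNIV"
    unfolding Q
  proof
    show "P \<inter> {p. e (snd p) \<le> e (fst p)} \<subseteq> range (\<lambda>i. (i, i))"
    proof
      fix p :: "'n\<times>'n" assume "p \<in> P \<inter> {p. e (snd p) \<le> e (fst p)}"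
      then have "e (fst p) = e (snd p)" by (auto simp: P_def)
      then have "fst p = snd p" using inj by (simp add: inj_eq)
      then show "p \<in> range (\<lambda>i. (i, i))" by (cases p) auto
    qed
  qed (auto simp: P_def)
  have cI: "card ((\<lambda>i::'n. (i,i)) ` UNIV) = CARD('n)"
    by (rule card_image) (simp add: inj_on_def)
  have cU: "card (UNIV :: ('n\<times>'n) set) = CARD('n) * CARD('n)"
    by (simp add: UNIV_Times_UNIV[symmetric] card_cartesian_product del: UNIV_Times_UNIV)
  have "card P + card (prod.swap ` P) = card (P \<union> prod.swap ` P) + card (P \<inter> prod.swap ` P)"
    by (rule card_Un_Int) auto
  then have "2 * card P = CARD('n) * (CARD('n) + 1)"
  proof -
    have "card P + card P = CARD('n) * CARD('n) + CARD('n)"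
      using \<open>card P + card (prod.swap ` P) = _\<close> unfolding cQ U I cI cU .
    then show ?thesis by (simp add: algebra_simps)
  qed
  then show ?thesis unfolding P_def by simp
qed

lemma sym_dim:
  "\<exists>B. finite B \<and> card B \<le> CARD('n::finite) * (CARD('n) + 1) div 2
      \<and> {X::real^'n^'n. transpose X = X} \<subseteq> span B"
proof -
  obtain e :: "'n \<Rightarrow> nat" and m where "e ` UNIV = {i. i < m}" "inj_on e UNIV"
    using finite_imp_inj_to_nat_seg[of "UNIV :: 'n set"] by auto
  then have inj: "inj e" by simp
  show ?thesis
    apply (rule exI[of _ "Fm ` {p. e (fst p) \<le> e (snd p)}"])
    using sym_span[OF inj] card_half[OF inj] card_image_le[of "{p. e (fst p) \<le> e (snd p)}" Fm]
    by auto
qed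

definition Wsym :: "((real^'n^'n) \<times> (real^'m^'m)) set" where
  "Wsym = {z. transpose (fst z) = fst z \<and> transpose (snd z) = snd z}"

lemma dim_Wsym:
  "dim (Wsym :: ((real^'n::finite^'n) \<times> (real^'m::finite^'m)) set)
     \<le> CARD('n) * (CARD('n) + 1) div 2 + CARD('m) * (CARD('m) + 1) div 2"
proof -
  obtain B1 :: "(real^'n^'n) set" where B1: "finite B1" "card B1 \<le> CARD('n) * (CARD('n) + 1) div 2"
      "{X. transpose X = X} \<subseteq> span B1" using sym_dim by blast
  obtain B2 :: "(real^'m^'m) set" where B2: "finite B2" "card B2 \<le> CARD('m) * (CARD('m) + 1) div 2"
      "{X. transpose X = X} \<subseteq> span B2" using sym_dim by blast
  define B where "B = (\<lambda>A. (A, 0::real^'m^'m)) ` B1 \<union> (\<lambda>A. (0::real^'n^'n, A)) ` B2"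
  have l1: "linear (\<lambda>A::real^'n^'n. (A, 0::real^'m^'m))"
    by (rule linearI) auto
  have l2: "linear (\<lambda>A::real^'m^'m. (0::real^'n^'n, A))"
    by (rule linearI) auto
  have WB: "(Wsym :: ((real^'n^'n) \<times> (real^'m^'m)) set) \<subseteq> span B"
  proof
    fix z :: "(real^'n^'n) \<times> (real^'m^'m)" assume "z \<in> Wsym"
    then have z1: "fst z \<in> span B1" and z2: "snd z \<in> span B2"
      using B1(3) B2(3) by (auto simp: Wsym_def)
    have "(fst z, 0::real^'m^'m) \<in> span ((\<lambda>A. (A, 0::real^'m^'m)) ` B1)"
      unfolding span_linear_image[OF l1] using z1 by auto
    then have a: "(fst z, 0::real^'m^'m) \<in> span B" unfolding B_def
      by (meson span_mono subsetD sup_ge1)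
    have "(0::real^'n^'n, snd z) \<in> span ((\<lambda>A. (0::real^'n^'n, A)) ` B2)"
      unfolding span_linear_image[OF l2] using z2 by auto
    then have b: "(0::real^'n^'n, snd z) \<in> span B" unfolding B_def
      by (meson span_mono subsetD sup_ge2)
    have "z = (fst z, 0) + (0, snd z)" by simp
    then show "z \<in> span B" using span_add[OF a b] by metis
  qed
  have "dim (Wsym :: ((real^'n^'n) \<times> (real^'m^'m)) set) \<le> card B" by (rule dim_le_card[OF WB]) (simp add: B_def B1(1) B2(1))
  also have "card B \<le> card B1 + card B2"
    unfolding B_def by (rule order_trans[OF card_Un_le]) (intro add_mono card_image_le B1 B2)
  finally show ?thesis using B1 B2 by linarith
qed

lemma exists_dep:
  fixes p :: "nat \<Rightarrow> 'v::euclidean_space"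
  assumes inW: "\<And>j. j \<le> N \<Longrightarrow> p j \<in> W" and dW: "dim W \<le> N"
  shows "\<exists>i\<le>N. p i \<in> span (p ` {..<i})"
proof (rule ccontr)
  assume "\<not> ?thesis"
  then have nd: "\<And>i. i \<le> N \<Longrightarrow> p i \<notin> span (p ` {..<i})" by blast
  have ind: "m \<le> Suc N \<Longrightarrow> independent (p ` {..<m}) \<and> card (p ` {..<m}) = m" for m
  proof (induction m)
    case 0 then show ?case by (simp add: independent_empty)
  next
    case (Suc m)
    then have mN: "m \<le> N" by simp
    have IH: "independent (p ` {..<m})" "card (p ` {..<m}) = m" using Suc.IH mN by simp_all
    have ns: "p m \<notin> span (p ` {..<m})" using nd mN by blast
    then have nin: "p m \<notin> p ` {..<m}" using span_base[of "p m" "p ` {..<m}"] by (rule contrapos_nn)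
    have eq: "p ` {..<Suc m} = insert (p m) (p ` {..<m})" by (simp add: lessThan_Suc)
    show ?case unfolding eq using IH ns nin by (simp add: independent_insert card_insert_disjoint)
  qed
  from ind[of "Suc N"] have i1: "independent (p ` {..<Suc N})" and c1: "card (p ` {..<Suc N}) = Suc N"
    by simp_all
  have sub: "p ` {..<Suc N} \<subseteq> W" using inW by (auto simp: less_Suc_eq_le)
  have "Suc N \<le> dim W" using independent_card_le_dim[OF sub i1] c1 by simp
  then show False using dW by simp
qed

lemma key:
  fixes G :: "'o list \<Rightarrow> 'v::euclidean_space \<Rightarrow> 'v" and \<eta> :: "'v \<Rightarrow> real"
  assumes lin: "\<And>u. linear (G u)" and leta: "linear \<eta>"
    and comp: "\<And>u u' z. G (u @ u') z = G u' (G u z)"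
    and inW: "\<And>u. G u base \<in> W" and dW: "dim W \<le> N"
    and Pcl: "\<And>w i j. j \<le> i \<Longrightarrow> P w \<Longrightarrow> P (take j w @ drop i w)"
    and hyp: "\<And>w. P w \<Longrightarrow> length w < N \<Longrightarrow> \<eta> (G w base) = 0"
  shows "P w \<Longrightarrow> \<eta> (G w base) = 0"
proof (induction "length w" arbitrary: w rule: less_induct)
  case less
  show ?case
  proof (cases "length w < N")
    case True then show ?thesis by (rule hyp[OF less.prems])
  next
    case False
    define p where "p j = G (take j w) base" for j
    have "\<exists>i\<le>N. p i \<in> span (p ` {..<i})"
      by (rule exists_dep[OF _ dW]) (simp add: p_def inW)
    then obtain i where iN: "i \<le> N" and sp: "p i \<in> span (p ` {..<i})"
      by blast
    define L where "L = (\<lambda>z. \<eta> (G (drop i w) z))"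
    have lL: "linear L" unfolding L_def using linear_compose[OF lin leta] by (simp add: o_def)
    have z: "L (p j) = 0" if "j < i" for j
    proof -
      have "L (p j) = \<eta> (G (take j w @ drop i w) base)" unfolding L_def p_def comp ..
      also have "\<dots> = 0"
      proof (rule less.hyps)
        show "length (take j w @ drop i w) < length w" using that iN False by simp
        show "P (take j w @ drop i w)" using Pcl[of j i w] that less.prems by simp
      qed
      finally show ?thesis .
    qed
    have "L (p i) = 0"
    proof (rule span_induct[OF sp, where P="\<lambda>z. L z = 0"])
      show "subspace {z. L z = 0}" by (rule linear_subspace_kernel[OF lL])
    next
      fix x assume "x \<in> p ` {..<i}"
      then obtain j where "j < i" "x = p j" by auto
      then show "L x = 0" using z by simp
    qed
    moreover have "L (p i) = \<eta> (G w base)"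
      unfolding L_def p_def comp[symmetric] by simp
    ultimately show ?thesis by simp
  qed
qed

definition cm :: "real^'n^'m \<Rightarrow> complex^'n^'m" where
  "cm A = (\<chi> i j. complex_of_real (A $ i $ j))"
definition rm :: "complex^'n^'m \<Rightarrow> real^'n^'m" where
  "rm A = (\<chi> i j. Re (A $ i $ j))"

fun rW :: "('a \<Rightarrow> real^'n^'n) \<Rightarrow> 'a list \<Rightarrow> real^'n^'n" where
  "rW t [] = mat 1"
| "rW t (x # xs) = rW t xs ** t x"

lemma rW_append: "rW t (u @ u') = rW t u' ** rW t u"
  by (induction u) (simp_all add: matrix_mul_assoc)

lemma cm_mult: "cm (A ** B) = cm A ** cm B"
proof (subst vec_eq_iff, intro allI, subst vec_eq_iff, intro allI)
  fix i j
  show "cm (A ** B) $ i $ j = (cm A ** cm B) $ i $ j"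
    unfolding cm_def matrix_matrix_mult_def by (simp add: of_real_sum)
qed

lemma cm_mat1: "cm (mat 1) = mat 1"
  by (simp add: cm_def mat_def vec_eq_iff)

lemma cm_rm: "real_matrix A \<Longrightarrow> cm (rm A) = A"
  by (simp add: cm_def rm_def real_matrix_def vec_eq_iff of_real_Re)

lemma Uword_real: "(\<And>x. real_matrix (T x)) \<Longrightarrow> Uword T w = cm (rW (rm \<circ> T) w)"
  by (induction w) (simp_all add: cm_mat1 cm_mult cm_rm)

lemma herm: "adj \<rho> = \<rho> \<Longrightarrow> cnj (\<rho> $ l $ k) = \<rho> $ k $ l"
proof -
  assume h: "adj \<rho> = \<rho>"
  have "adj \<rho> $ k $ l = \<rho> $ k $ l" using h by simp
  then show ?thesis by (simp add: adj_def)
qed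

lemma antisym_sum:
  fixes m :: "'n::finite \<Rightarrow> 'n \<Rightarrow> real"
  assumes "\<And>k l. m l k = - m k l"
  shows "(\<Sum>k\<in>UNIV. \<Sum>l\<in>UNIV. c k * c l * m k l) = 0"
proof -
  have "(\<Sum>k\<in>UNIV. \<Sum>l\<in>UNIV. c k * c l * m k l) = (\<Sum>l\<in>UNIV. \<Sum>k\<in>UNIV. c k * c l * m k l)"
    by (rule sum.swap)
  also have "\<dots> = (\<Sum>l\<in>UNIV. \<Sum>k\<in>UNIV. - (c l * c k * m l k))"
  proof (intro sum.cong refl)
    fix l k
    have "m l k = - m k l" by (rule assms)
    then show "c k * c l * m k l = - (c l * c k * m l k)" by simp
  qed
  also have "\<dots> = - (\<Sum>l\<in>UNIV. \<Sum>k\<in>UNIV. c l * c k * m l k)"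
    by (simp only: sum_negf)
  finally show ?thesis by simp
qed

lemma Pr_real:
  fixes v :: "real^'n^'n"
  assumes h: "adj \<rho> = \<rho>"
  shows "mtrace (cm v ** \<rho> ** adj (cm v)) = complex_of_real (rtr (v ** rm \<rho> ** transpose v))"
proof -
  have L: "mtrace (cm v ** \<rho> ** adj (cm v))
      = (\<Sum>i\<in>UNIV. \<Sum>l\<in>UNIV. \<Sum>k\<in>UNIV. complex_of_real (v $ i $ k * v $ i $ l) * \<rho> $ k $ l)"
  proof -
    have "(cm v ** \<rho> ** adj (cm v)) $ i $ i = (\<Sum>l\<in>UNIV. \<Sum>k\<in>UNIV. complex_of_real (v $ i $ k * v $ i $ l) * \<rho> $ k $ l)" for i
    proof -
      have "(cm v ** \<rho> ** adj (cm v)) $ i $ i = (\<Sum>l\<in>UNIV. (\<Sum>k\<in>UNIV. complex_of_real (v $ i $ k) * \<rho> $ k $ l) * complex_of_real (v $ i $ l))"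
        by (simp add: matrix_matrix_mult_def adj_def cm_def)
      also have "\<dots> = (\<Sum>l\<in>UNIV. \<Sum>k\<in>UNIV. complex_of_real (v $ i $ k * v $ i $ l) * \<rho> $ k $ l)"
        by (simp add: sum_distrib_right sum_distrib_left mult_ac)
      finally show ?thesis .
    qed
    then show ?thesis by (simp add: mtrace_def)
  qed
  have R: "rtr (v ** rm \<rho> ** transpose v)
      = (\<Sum>i\<in>UNIV. \<Sum>l\<in>UNIV. \<Sum>k\<in>UNIV. v $ i $ k * v $ i $ l * Re (\<rho> $ k $ l))"
  proof -
    have "(v ** rm \<rho> ** transpose v) $ i $ i = (\<Sum>l\<in>UNIV. \<Sum>k\<in>UNIV. v $ i $ k * v $ i $ l * Re (\<rho> $ k $ l))" for i
    proof -
      have "(v ** rm \<rho> ** transpose v) $ i $ i = (\<Sum>l\<in>UNIV. (\<Sum>k\<in>UNIV. v $ i $ k * Re (\<rho> $ k $ l)) * v $ i $ l)"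
        by (simp add: matrix_matrix_mult_def transpose_def rm_def)
      also have "\<dots> = (\<Sum>l\<in>UNIV. \<Sum>k\<in>UNIV. v $ i $ k * v $ i $ l * Re (\<rho> $ k $ l))"
        by (simp add: sum_distrib_right sum_distrib_left mult_ac)
      finally show ?thesis .
    qed
    then show ?thesis by (simp add: rtr_def)
  qed
  have im: "Im (\<rho> $ l $ k) = - Im (\<rho> $ k $ l)" for k l
  proof -
    have "Im (cnj (\<rho> $ l $ k)) = Im (\<rho> $ k $ l)" using herm[OF h, of l k] by simp
    then show ?thesis by simp
  qed
  have I0: "(\<Sum>l\<in>UNIV. \<Sum>k\<in>UNIV. v $ i $ k * v $ i $ l * Im (\<rho> $ k $ l)) = 0" for i
  proof -
    have "(\<Sum>l\<in>UNIV. \<Sum>k\<in>UNIV. v $ i $ k * v $ i $ l * Im (\<rho> $ k $ l))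
        = (\<Sum>l\<in>UNIV. \<Sum>k\<in>UNIV. v $ i $ l * v $ i $ k * Im (\<rho> $ k $ l))"
      by (simp add: mult_ac)
    also have "\<dots> = 0"
      by (rule antisym_sum[where m="\<lambda>l k. Im (\<rho> $ k $ l)"]) (rule im)
    finally show ?thesis .
  qed
  show ?thesis
  proof (rule complex_eqI)
    show "Re (mtrace (cm v ** \<rho> ** adj (cm v))) = Re (complex_of_real (rtr (v ** rm \<rho> ** transpose v)))"
      unfolding L R by (simp add: Re_sum)
    show "Im (mtrace (cm v ** \<rho> ** adj (cm v))) = Im (complex_of_real (rtr (v ** rm \<rho> ** transpose v)))"
      unfolding L by (simp add: Im_sum I0)
  qed
qed

lemma rm_sym: "adj \<rho> = \<rho> \<Longrightarrow> transpose (rm \<rho>) = rm \<rho>"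
proof -
  assume h: "adj \<rho> = \<rho>"
  have e: "transpose (rm \<rho>) $ i $ j = rm \<rho> $ i $ j" for i j
  proof -
    have "cnj (\<rho> $ i $ j) = \<rho> $ j $ i" by (rule herm[OF h])
    then have "Re (cnj (\<rho> $ i $ j)) = Re (\<rho> $ j $ i)" by simp
    then have "Re (\<rho> $ j $ i) = Re (\<rho> $ i $ j)" by simp
    then show ?thesis by (simp add: transpose_def rm_def)
  qed
  show ?thesis using e by (simp add: vec_eq_iff)
qed

fun dec :: "('s + 'g) list \<Rightarrow> 's list \<times> nat list \<times> 'g list" where
  "dec [] = ([], [], [])"
| "dec (Inl s # w) = (case dec w of (a, S, b) \<Rightarrow> (s # a, map Suc S, b))"
| "dec (Inr g # w) = (case dec w of (a, S, b) \<Rightarrow> (a, 0 # S, g # b))"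

definition cnt :: "('s + 'g) list \<Rightarrow> nat" where
  "cnt w = length (filter (\<lambda>x. \<not> isl x) w)"

lemma dec_props:
  "dec w = (a, S, b) \<Longrightarrow> scheduler S a \<and> length b = length S \<and> length a + length S = length w
     \<and> length S = cnt w"
proof (induction w arbitrary: a S b rule: dec.induct)
  case 1 then show ?case by (auto simp: scheduler_def cnt_def)
next
  case (2 s w)
  obtain a' S' b' where d: "dec w = (a', S', b')" by (metis prod_cases3)
  with 2 have IH: "scheduler S' a'" "length b' = length S'" "length a' + length S' = length w"
     "length S' = cnt w" by auto
  from 2(2) d have e: "a = s # a'" "S = map Suc S'" "b = b'" by auto
  show ?case using IH unfolding e by (auto simp: scheduler_def cnt_def sorted_map)
next
  case (3 g w)
  obtain a' S' b' where d: "dec w = (a', S', b')" by (metis prod_cases3)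
  with 3 have IH: "scheduler S' a'" "length b' = length S'" "length a' + length S' = length w"
     "length S' = cnt w" by auto
  from 3(2) d have e: "a = a'" "S = 0 # S'" "b = g # b'" by auto
  show ?case using IH unfolding e by (auto simp: scheduler_def cnt_def)
qed

lemma seg_length: "length (segments a S) = Suc (length S)"
  by (simp add: segments_def)

lemma seg0: "segments a (0 # S) = [] # segments a S"
  by (simp add: segments_def)

lemma segSuc: "segments (s # a) (map Suc S) = (s # hd (segments a S)) # tl (segments a S)"
proof (cases S)
  case Nil then show ?thesis by (simp add: segments_def)
next
  case (Cons x S')
  have "zip (map Suc S') (map Suc S' @ [Suc (length a)]) = zip (map Suc S') (map Suc (S' @ [length a]))"
    by simp
  have z: "zip (Suc x # map Suc S') (map Suc S' @ [Suc (length a)])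
      = map (\<lambda>(l, r). (Suc l, Suc r)) (zip (x # S') (S' @ [length a]))"
    by (simp add: zip_map_map[of Suc "x # S'" Suc "S' @ [length a]", simplified])
  show ?thesis using Cons
    by (simp add: segments_def z split: prod.splits)
qed

lemma Vprod_cons: "Vprod U M ((s # x) # xs) b = Vprod U M (x # xs) b ** U s"
proof (cases xs)
  case Nil then show ?thesis
    by (cases b) (simp_all add: matrix_mul_assoc)
next
  case (Cons y ys) then show ?thesis
    by (cases b) (simp_all add: matrix_mul_assoc)
qed

lemma dec_Vop: "dec w = (a, S, b) \<Longrightarrow> Vprod U M (segments a S) b = Uword (case_sum U M) w"
proof (induction w arbitrary: a S b rule: dec.induct)
  case 1 then show ?case by (simp add: segments_def)
next
  case (2 s w)
  obtain a' S' b' where d: "dec w = (a', S', b')" by (metis prod_cases3)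
  from 2(2) d have e: "a = s # a'" "S = map Suc S'" "b = b'" by auto
  obtain x xs where sx: "segments a' S' = x # xs"
    using seg_length[of a' S'] by (cases "segments a' S'") auto
  have "Vprod U M (segments a S) b = Vprod U M (x # xs) b' ** U s"
    unfolding e segSuc sx by (simp add: Vprod_cons)
  also have "\<dots> = Uword (case_sum U M) w ** U s"
    using 2(1)[OF d] sx by simp
  finally show ?case by simp
next
  case (3 g w)
  obtain a' S' b' where d: "dec w = (a', S', b')" by (metis prod_cases3)
  from 3(2) d have e: "a = a'" "S = 0 # S'" "b = g # b'" by auto
  obtain x xs where sx: "segments a' S' = x # xs"
    using seg_length[of a' S'] by (cases "segments a' S'") auto
  have "Vprod U M (segments a S) b = Vprod U M (x # xs) b' ** M g"
    unfolding e seg0 sx by simp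
  also have "\<dots> = Uword (case_sum U M) w ** M g"
    using 3(1)[OF d] sx by simp
  finally show ?case by simp
qed

lemma dec_surj:
  "scheduler S a \<Longrightarrow> length b = length S \<Longrightarrow> \<exists>w. dec w = (a, S, b)"
proof (induction "length a + length S" arbitrary: a S b rule: less_induct)
  case less
  show ?case
  proof (cases "S \<noteq> [] \<and> hd S = 0")
    case True
    then obtain S' where S: "S = 0 # S'" by (cases S) auto
    then obtain g b' where b: "b = g # b'" using less.prems(2) by (cases b) auto
    have "scheduler S' a" using less.prems(1) unfolding S scheduler_def by simp
    moreover have "length b' = length S'" using less.prems(2) unfolding S b by simp
    ultimately obtain w where "dec w = (a, S', b')" using less.hyps[of a S'] unfolding S by auto
    then have "dec (Inr g # w) = (a, S, b)" unfolding S b by simp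
    then show ?thesis by blast
  next
    case False
    have pos: "\<forall>x\<in>set S. 0 < x"
    proof (cases S)
      case (Cons y ys)
      with False have "0 < y" by simp
      moreover have "\<forall>x\<in>set ys. y \<le> x" using less.prems(1) Cons by (simp add: scheduler_def)
      ultimately show ?thesis using Cons by auto
    qed simp
    show ?thesis
    proof (cases a)
      case Nil
      then have "S = []" using pos less.prems(1) by (cases S) (auto simp: scheduler_def)
      then have "b = []" using less.prems(2) by simp
      show ?thesis
        by (rule exI[of _ "[]"]) (simp add: Nil \<open>S = []\<close> \<open>b = []\<close>)
    next
      case (Cons s a')
      define S' where "S' = map (\<lambda>x. x - 1) S"
      have SS: "S = map Suc S'" unfolding S'_def using pos by (induction S) auto
      have "scheduler S' a'" using less.prems(1) unfolding scheduler_def Cons SS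
        by (simp add: sorted_map)
      moreover have "length b = length S'" using less.prems(2) by (simp add: S'_def)
      ultimately obtain w where "dec w = (a', S', b)"
        using less.hyps[of a' S'] unfolding Cons S'_def by auto
      then have "dec (Inl s # w) = (a, S, b)" unfolding Cons SS by simp
      then show ?thesis by blast
    qed
  qed
qed

lemma cnt_append: "cnt (xs @ ys) = cnt xs + cnt ys" by (simp add: cnt_def)

lemma cnt_drop: "cnt (drop n xs) \<le> cnt xs"
  using cnt_append[of "take n xs" "drop n xs"] by simp

lemma cnt_cl: "j \<le> i \<Longrightarrow> cnt (take j w @ drop i w) \<le> cnt w"
proof -
  assume ji: "j \<le> i"
  have a: "cnt w = cnt (take j w) + cnt (drop j w)" using cnt_append[of "take j w" "drop j w"] by simp
  have "drop i w = drop (i - j) (drop j w)" using ji by simp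
  then have "cnt (drop i w) \<le> cnt (drop j w)" using cnt_drop by metis
  then show ?thesis using a by (simp add: cnt_append)
qed

lemma linear_pair: "linear f \<Longrightarrow> linear g \<Longrightarrow> linear (\<lambda>z. (f (fst z), g (snd z)))"
  unfolding linear_iff by simp

lemma N_pos: "1 \<le> CARD('n::finite) * (CARD('n) + 1) div 2"
proof -
  have "0 < CARD('n)" by (simp add: finite_UNIV_card_ge_0)
  then have "1 * 2 \<le> CARD('n) * (CARD('n) + 1)" by (intro mult_le_mono) auto
  then show ?thesis by simp
qed

theorem mainTheorem4:
  fixes U1 :: "'s::finite \<Rightarrow> complex^'n1^'n1" and M1 :: "'g::finite \<Rightarrow> complex^'n1^'n1"
    and U2 :: "'s \<Rightarrow> complex^'n2^'n2" and M2 :: "'g \<Rightarrow> complex^'n2^'n2"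
    and \<rho>1 :: "complex^'n1^'n1" and \<rho>2 :: "complex^'n2^'n2"
  assumes "real_qmm U1 M1" and "real_qmm U2 M2"
    and "density_op \<rho>1" and "density_op \<rho>2"
  defines "N' \<equiv> CARD('n1) * (CARD('n1) + 1) div 2 + CARD('n2) * (CARD('n2) + 1) div 2 - 1"
  shows "(qequiv U1 M1 \<rho>1 U2 M2 \<rho>2 \<longleftrightarrow> qequiv_m N' U1 M1 \<rho>1 U2 M2 \<rho>2)
       \<and> (\<forall>k::nat. qequiv_k k U1 M1 \<rho>1 U2 M2 \<rho>2 \<longleftrightarrow> qequiv_km k N' U1 M1 \<rho>1 U2 M2 \<rho>2)"
proof -
  define N where "N = CARD('n1) * (CARD('n1) + 1) div 2 + CARD('n2) * (CARD('n2) + 1) div 2"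
  have N1: "1 \<le> N" unfolding N_def using N_pos[where 'n='n1] by linarith
  have NN': "\<And>l. l < N \<longleftrightarrow> l \<le> N'" unfolding N'_def N_def[symmetric] using N1 by linarith
  have r1: "\<And>x. real_matrix (case_sum U1 M1 x)" using assms(1)
    by (auto simp: real_qmm_def split: sum.splits)
  have r2: "\<And>x. real_matrix (case_sum U2 M2 x)" using assms(2)
    by (auto simp: real_qmm_def split: sum.splits)
  have h1: "adj \<rho>1 = \<rho>1" using assms(3) by (simp add: density_op_def)
  have h2: "adj \<rho>2 = \<rho>2" using assms(4) by (simp add: density_op_def)
  define t1 where "t1 = rm \<circ> case_sum U1 M1"
  define t2 where "t2 = rm \<circ> case_sum U2 M2"
  define G :: "('s + 'g) list \<Rightarrow> (real^'n1^'n1) \<times> (real^'n2^'n2) \<Rightarrow> (real^'n1^'n1) \<times> (real^'n2^'n2)"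
    where "G u z = (rW t1 u ** fst z ** transpose (rW t1 u), rW t2 u ** snd z ** transpose (rW t2 u))"
    for u z
  define x0 where "x0 = (rm \<rho>1, rm \<rho>2)"
  define \<eta> :: "(real^'n1^'n1) \<times> (real^'n2^'n2) \<Rightarrow> real" where "\<eta> z = rtr (fst z) - rtr (snd z)" for z
  have linG: "\<And>u. linear (G u)"
    unfolding G_def by (intro linear_pair linear_sandwich)
  have leta: "linear \<eta>"
  proof -
    have "linear (\<lambda>z::(real^'n1^'n1) \<times> (real^'n2^'n2). rtr (fst z))"
      using linear_compose[OF linear_fst linear_rtr] by (simp add: o_def)
    moreover have "linear (\<lambda>z::(real^'n1^'n1) \<times> (real^'n2^'n2). rtr (snd z))"
      using linear_compose[OF linear_snd linear_rtr] by (simp add: o_def)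
    ultimately show ?thesis unfolding \<eta>_def by (rule linear_compose_sub)
  qed
  have comp: "\<And>u u' z. G (u @ u') z = G u' (G u z)"
    by (simp add: G_def rW_append matrix_transpose_mul matrix_mul_assoc)
  have inW: "\<And>u. G u x0 \<in> Wsym"
    by (simp add: G_def x0_def Wsym_def matrix_transpose_mul matrix_mul_assoc rm_sym h1 h2)
  have dW: "dim (Wsym :: ((real^'n1^'n1) \<times> (real^'n2^'n2)) set) \<le> N"
    unfolding N_def by (rule dim_Wsym)
  have KEY: "\<And>w. P w \<Longrightarrow> \<eta> (G w x0) = 0"
    if Pcl: "\<And>w i j. j \<le> i \<Longrightarrow> P w \<Longrightarrow> P (take j w @ drop i w)"
      and hyp: "\<And>w. P w \<Longrightarrow> length w < N \<Longrightarrow> \<eta> (G w x0) = 0" for P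
    using key[where G=G and \<eta>=\<eta> and base=x0 and W=Wsym and N=N and P=P, OF linG leta comp inW dW Pcl hyp] by blast
  have bridge: "Pr U1 M1 \<rho>1 b a S = Pr U2 M2 \<rho>2 b a S \<longleftrightarrow> \<eta> (G w x0) = 0"
    if d: "dec w = (a, S, b)" for w a S b
  proof -
    have v1: "Vop U1 M1 b a S = cm (rW t1 w)"
      unfolding Vop_def dec_Vop[OF d] t1_def by (rule Uword_real[OF r1])
    have v2: "Vop U2 M2 b a S = cm (rW t2 w)"
      unfolding Vop_def dec_Vop[OF d] t2_def by (rule Uword_real[OF r2])
    have "Pr U1 M1 \<rho>1 b a S = complex_of_real (rtr (fst (G w x0)))"
      unfolding Pr_def v1 Pr_real[OF h1] by (simp add: G_def x0_def)
    moreover have "Pr U2 M2 \<rho>2 b a S = complex_of_real (rtr (snd (G w x0)))"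
      unfolding Pr_def v2 Pr_real[OF h2] by (simp add: G_def x0_def)
    ultimately show ?thesis by (simp add: \<eta>_def)
  qed
  have part1: "qequiv U1 M1 \<rho>1 U2 M2 \<rho>2 \<longleftrightarrow> qequiv_m N' U1 M1 \<rho>1 U2 M2 \<rho>2"
  proof
    assume "qequiv U1 M1 \<rho>1 U2 M2 \<rho>2"
    then show "qequiv_m N' U1 M1 \<rho>1 U2 M2 \<rho>2"
      by (simp add: qequiv_def qequiv_m_def equiv_on_def)
  next
    assume Q: "qequiv_m N' U1 M1 \<rho>1 U2 M2 \<rho>2"
    have all: "\<eta> (G w x0) = 0" for w
    proof (rule KEY[of "\<lambda>_. True"])
      fix w :: "('s + 'g) list" assume "length w < N"
      obtain a S b where d: "dec w = (a, S, b)" by (metis prod_cases3)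
      note pr = dec_props[OF d]
      have "length a + length S \<le> N'" using pr \<open>length w < N\<close> NN' by simp
      then have "Pr U1 M1 \<rho>1 b a S = Pr U2 M2 \<rho>2 b a S"
        using Q pr unfolding qequiv_m_def equiv_on_def by blast
      then show "\<eta> (G w x0) = 0" using bridge[OF d] by simp
    qed simp_all
    show "qequiv U1 M1 \<rho>1 U2 M2 \<rho>2"
      unfolding qequiv_def equiv_on_def
    proof (intro allI impI)
      fix a :: "'s list" and S :: "nat list" and b :: "'g list"
      assume s: "scheduler S a" and l: "length b = length S"
      obtain w where d: "dec w = (a, S, b)" using dec_surj[OF s l] by blast
      show "Pr U1 M1 \<rho>1 b a S = Pr U2 M2 \<rho>2 b a S" using bridge[OF d] all by simp
    qed
  qed
  have part2: "qequiv_k k U1 M1 \<rho>1 U2 M2 \<rho>2 \<longleftrightarrow> qequiv_km k N' U1 M1 \<rho>1 U2 M2 \<rho>2" for k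
  proof
    assume "qequiv_k k U1 M1 \<rho>1 U2 M2 \<rho>2"
    then show "qequiv_km k N' U1 M1 \<rho>1 U2 M2 \<rho>2"
      by (simp add: qequiv_k_def qequiv_km_def equiv_on_def)
  next
    assume Q: "qequiv_km k N' U1 M1 \<rho>1 U2 M2 \<rho>2"
    have all: "\<eta> (G w x0) = 0" if "cnt w \<le> k" for w
    proof (rule KEY[of "\<lambda>w. cnt w \<le> k", OF _ _ that])
      fix w :: "('s + 'g) list" and i j :: nat
      assume "j \<le> i" "cnt w \<le> k"
      then show "cnt (take j w @ drop i w) \<le> k" using cnt_cl[of j i w] by linarith
    next
      fix w :: "('s + 'g) list" assume c: "cnt w \<le> k" and "length w < N"
      obtain a S b where d: "dec w = (a, S, b)" by (metis prod_cases3)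
      note pr = dec_props[OF d]
      have "length a + length S \<le> N'" using pr \<open>length w < N\<close> NN' by simp
      moreover have "length S \<le> k" using pr c by simp
      ultimately have "Pr U1 M1 \<rho>1 b a S = Pr U2 M2 \<rho>2 b a S"
        using Q pr unfolding qequiv_km_def equiv_on_def by blast
      then show "\<eta> (G w x0) = 0" using bridge[OF d] by simp
    qed
    show "qequiv_k k U1 M1 \<rho>1 U2 M2 \<rho>2"
      unfolding qequiv_k_def equiv_on_def
    proof (intro allI impI)
      fix a :: "'s list" and S :: "nat list" and b :: "'g list"
      assume s: "scheduler S a" and l: "length b = length S" and sk: "length S \<le> k"
      obtain w where d: "dec w = (a, S, b)" using dec_surj[OF s l] by blast
      have "cnt w \<le> k" using dec_props[OF d] sk by simp
      then show "Pr U1 M1 \<rho>1 b a S = Pr U2 M2 \<rho>2 b a S" using bridge[OF d] all by simp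
    qed
  qed
  show ?thesis using part1 part2 by blast
qed

end
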